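(* Let $q=3^m$ with $m\ge1$. Then for every $i\in\{0,1,2\}$, $$\#\{x\in\mathbb{F}_q:\ \mathrm{Tr}_{\mathbb{F}_q/\mathbb{F}_3}(x)=i,\ \mathrm{Tr}_{\mathbb{F}_q/\mathbb{F}_3}(x^2)=0\}\ge\frac{q-6\sqrt q}{9}.$$
   Context: $\mathrm{Tr}_{\mathbb{F}_q/\mathbb{F}_3}$ is the absolute trace from $\mathbb{F}_q$ to $\mathbb{F}_3$. *)

theory Defs
  imports Complex_Main
begin

text \<open>Its values lie in the prime
  subfield, whose elements are of_nat 0, of_nat 1, of_nat 2.\<close>
definition abs_trace3 :: "nat \<Rightarrow> 'a::field \<Rightarrow> 'a" where
  "abs_trace3 m x = (\<Sum>j<m. x ^ (3 ^ j))"

end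

theory Submission
  imports Defs "HOL-Number_Theory.Number_Theory" "HOL-Computational_Algebra.Polynomial"
begin

lemma card_fiber_sum:
  assumes "finite A" "finite S" "\<And>x. x \<in> A \<Longrightarrow> g x \<in> S"
  shows "card A = (\<Sum>v\<in>S. card {x\<in>A. g x = v})"
proof -
  have "A = (\<Union>v\<in>S. {x\<in>A. g x = v})" using assms(3) by auto
  hence "card A = card (\<Union>v\<in>S. {x\<in>A. g x = v})" by simp
  also have "\<dots> = (\<Sum>v\<in>S. card {x\<in>A. g x = v})"
    by (rule card_UN_disjoint) (use assms in auto)
  finally show ?thesis .
qed

lemma row_bound: fixes a b c r :: real assumes "a + b + c = r" shows "a^2 + b^2 + c^2 \<ge> r^2 / 3"
proof -
  have "0 \<le> (a-b)^2 + (b-c)^2 + (a-c)^2" by simp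
  hence "3 * (a^2 + b^2 + c^2) \<ge> (a+b+c)^2" by (simp add: power2_eq_square algebra_simps)
  thus ?thesis using assms by simp
qed

lemma final_real: fixes a b c R r :: real
  assumes "a + b + c = r" "a^2 + b^2 + c^2 + R = r^2 + 2*r" "R \<ge> 2 * r^2 / 3" "r \<ge> 0"
  shows "a \<ge> (3*r - 6 * sqrt (3*r)) / 9"
proof (rule ccontr)
  assume neg: "\<not> ?thesis"
  define s where "s = sqrt (3*r)"
  have s0: "s \<ge> 0" and s2: "s^2 = 3*r" unfolding s_def using assms(4) by simp_all
  define e where "e = r/3 - a"
  have "e > 2*s/3" using neg unfolding e_def s_def by simp
  hence "e^2 > (2*s/3)^2" using s0 by (intro power_strict_mono) auto
  hence e2: "e^2 > 4*r/3" using s2 by (simp add: power_divide power_mult_distrib)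
  have "0 \<le> (b-c)^2" by simp
  hence "2*(b^2+c^2) \<ge> (b+c)^2" by (simp add: power2_eq_square algebra_simps)
  moreover have "b + c = r - a" using assms(1) by simp
  ultimately have "2*(b^2+c^2) \<ge> (r-a)^2" by simp
  hence "2*a^2 + (r-a)^2 + 4*r^2/3 \<le> 2*r^2 + 4*r" using assms(2,3) by argo
  moreover have "2*a^2 + (r-a)^2 + 4*r^2/3 = 3*e^2 + 2*r^2" unfolding e_def by (simp add: power2_eq_square field_simps)
  ultimately show False using e2 by argo
qed

definition AA :: "nat \<Rightarrow> 'b::field \<Rightarrow> 'b \<Rightarrow> nat" where
  "AA mm u v = card {x::'b. abs_trace3 mm x = u \<and> abs_trace3 mm (x^2) = v}"

context
  fixes m :: nat
  assumes m1: "m \<ge> 1" and cardF: "card (UNIV :: 'a::{field,finite} set) = 3 ^ m"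
begin

lemma char3: "CHAR('a) = 3"
proof -
  have pos: "CHAR('a) > 0" by (rule finite_imp_CHAR_pos) simp
  have pr: "prime CHAR('a)" by (rule prime_CHAR_semidom[OF pos])
  have "CHAR('a) dvd 3 ^ m" using CHAR_dvd_CARD[where 'a='a] cardF by simp
  hence "CHAR('a) dvd 3" using pr prime_dvd_power by blast
  moreover have "CHAR('a) \<ge> 2" using pr prime_ge_2_nat by blast
  moreover have "CHAR('a) \<le> 3" using \<open>CHAR('a) dvd 3\<close> by (rule dvd_imp_le) simp
  ultimately have "CHAR('a) = 2 \<or> CHAR('a) = 3" by linarith
  thus ?thesis using \<open>CHAR('a) dvd 3\<close> by auto
qed

lemma three0: "(3::'a) = 0"
  using of_nat_CHAR[where 'a='a] char3 by simp

lemma frob: "((x::'a) + y) ^ (3 ^ j) = x ^ (3 ^ j) + y ^ (3 ^ j)"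
  by (rule freshmans_dream') (auto simp: char3)

lemma T_add: "abs_trace3 m ((x::'a) + y) = abs_trace3 m x + abs_trace3 m y"
  unfolding abs_trace3_def by (simp add: frob sum.distrib)

lemma pow_card: "(x::'a) ^ (3 ^ m) = x"
proof (cases "x = 0")
  case False
  have "x * (\<Prod>y\<in>UNIV-{0}. x * y) = x * x ^ (card (UNIV :: 'a set) - 1) * \<Prod>(UNIV-{0})"
    by (simp add: prod.distrib mult_ac)
  also have "x * x ^ (card (UNIV :: 'a set) - 1) = x ^ Suc (card (UNIV :: 'a set) - 1)"
    by (subst power_Suc) auto
  also have "Suc (card (UNIV :: 'a set) - 1) = card (UNIV :: 'a set)"
    using finite_UNIV_card_ge_0[where ?'a = 'a] by simp
  also have "(\<Prod>y\<in>UNIV-{0}. x * y) = (\<Prod>y\<in>UNIV-{0}. y)"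
    by (rule prod.reindex_bij_witness[of _ "\<lambda>y. y / x" "\<lambda>y. x * y"]) (use False in auto)
  finally show ?thesis using cardF
    by simp
qed (use m1 in auto)

lemma T_cube: "abs_trace3 m (x::'a) ^ 3 = abs_trace3 m x"
proof -
  have "abs_trace3 m x ^ 3 = (\<Sum>j<m. (x ^ (3 ^ j)) ^ 3)"
    unfolding abs_trace3_def by (rule freshmans_dream_sum) (auto simp: char3)
  also have "\<dots> = (\<Sum>j<m. x ^ (3 ^ Suc j))" by (simp add: power_mult[symmetric] mult.commute)
  also have "\<dots> = abs_trace3 m x"
  proof -
    have "(\<Sum>j<Suc m. x ^ (3 ^ j)) = x ^ (3^0) + (\<Sum>j<m. x ^ (3 ^ Suc j))"
      by (rule sum.lessThan_Suc_shift)
    moreover have "(\<Sum>j<Suc m. x ^ (3 ^ j)) = (\<Sum>j<m. x ^ (3 ^ j)) + x ^ (3 ^ m)" by simp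
    ultimately show ?thesis unfolding abs_trace3_def using pow_card by simp
  qed
  finally show ?thesis .
qed

lemma T_vals: "abs_trace3 m (x::'a) \<in> {0,1,2}"
proof -
  define t where "t = abs_trace3 m x"
  have "t * (t - 1) * (t - 2) = t ^ 3 - 3 * t^2 + 2 * t" by (simp add: algebra_simps power2_eq_square power3_eq_cube)
  also have "\<dots> = t ^ 3 - t" using three0 by (simp add: algebra_simps)
  also have "\<dots> = 0" using T_cube t_def by simp
  finally show ?thesis unfolding t_def[symmetric] by auto
qed

lemma dist012: "(0::'a) \<noteq> 1" "(0::'a) \<noteq> 2" "(1::'a) \<noteq> 2"
proof -
  show "(0::'a) \<noteq> 1" by simp
  show "(0::'a) \<noteq> 2" using three0 by (metis add.commute add_0 one_add_one one_plus_numeral semiring_norm(3) zero_neq_one)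
  then show "(1::'a) \<noteq> 2" by (metis add_cancel_right_left one_add_one)
qed

lemma T_nonzero: "\<exists>z::'a. abs_trace3 m z \<noteq> 0"
proof (rule ccontr)
  assume neg: "\<not> ?thesis"
  hence all0: "\<And>z::'a. abs_trace3 m z = 0" by blast
  define p :: "'a poly" where "p = (\<Sum>j<m. monom 1 (3 ^ j))"
  have pz: "poly p z = abs_trace3 m z" for z
    unfolding p_def abs_trace3_def by (simp add: poly_sum poly_monom)
  have "coeff p (3 ^ (m - 1)) = (\<Sum>j<m. if 3 ^ j = (3::nat) ^ (m - 1) then 1 else 0)"
    unfolding p_def by (simp add: coeff_sum coeff_monom)
  also have "\<dots> = (\<Sum>j\<in>{m - 1}. 1)"
    by (rule sum.mono_neutral_cong_right) (use m1 in auto)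
  finally have "coeff p (3 ^ (m - 1)) = 1" by simp
  hence pnz: "p \<noteq> 0" by auto
  have "degree p \<le> 3 ^ (m - 1)"
    unfolding p_def by (rule degree_sum_le) (use m1 in \<open>auto intro: order.trans[OF degree_monom_le]\<close>)
  moreover have "card {x. poly p x = 0} \<le> degree p" by (rule card_poly_roots_bound[OF pnz])
  moreover have "{x. poly p x = 0} = (UNIV :: 'a set)" using pz all0 by auto
  ultimately have "card (UNIV::'a set) \<le> 3 ^ (m - 1)" by (metis order.trans)
  moreover have "(3::nat) ^ (m - 1) < 3 ^ m" using m1 by (intro power_strict_increasing) auto
  ultimately show False using cardF by linarith
qed

lemma shift_card: "card {x::'a. abs_trace3 m x = c + abs_trace3 m z} = card {x. abs_trace3 m x = c}"
proof -
  have "{x::'a. abs_trace3 m x = c + abs_trace3 m z} = (\<lambda>x. x + z) ` {x. abs_trace3 m x = c}"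
  proof (intro equalityI subsetI)
    fix y assume "y \<in> {x::'a. abs_trace3 m x = c + abs_trace3 m z}"
    hence "y - z \<in> {x. abs_trace3 m x = c}" using T_add[of "y - z" z] by simp
    thus "y \<in> (\<lambda>x. x + z) ` {x. abs_trace3 m x = c}" by (rule rev_image_eqI) simp
  next
    fix y assume "y \<in> (\<lambda>x. x + z) ` {x. abs_trace3 m x = c}"
    thus "y \<in> {x::'a. abs_trace3 m x = c + abs_trace3 m z}" by (auto simp: T_add)
  qed
  thus ?thesis by (simp add: card_image)
qed

abbreviation "rr \<equiv> (3::nat) ^ (m - 1)"

lemma fiber_card: assumes "c \<in> {0,1,2::'a}" shows "card {x::'a. abs_trace3 m x = c} = rr"
proof -
  obtain z :: 'a where z: "abs_trace3 m z \<noteq> 0" using T_nonzero by blast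
  define t where "t = abs_trace3 m z"
  have t: "t = 1 \<or> t = 2" using T_vals[of z] z t_def by auto
  have k: "card {x::'a. abs_trace3 m x = of_nat k * t} = card {x::'a. abs_trace3 m x = 0}" for k
  proof (induction k)
    case (Suc k)
    then show ?case using shift_card[of "of_nat k * t" z] by (simp add: t_def algebra_simps)
  qed simp
  have c012: "card {x::'a. abs_trace3 m x = c} = card {x::'a. abs_trace3 m x = 0}" if "c \<in> {0,1,2}" for c
  proof -
    have "\<exists>k. c = of_nat k * t"
    proof (cases "t = 1")
      case True
      then show ?thesis using that by (metis mult_1_right of_nat_0 of_nat_1 of_nat_numeral empty_iff insert_iff)
    next
      case False
      hence t2: "t = 2" using t by auto
      have "(of_nat 2 * 2 :: 'a) = 3 + 1" by simp
      hence e1: "(1::'a) = of_nat 2 * 2" using three0 by simp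
      have e0: "(0::'a) = of_nat 0 * 2" by simp
      have e2: "(2::'a) = of_nat 1 * 2" by simp
      from that consider "c = 0" | "c = 1" | "c = 2" by blast
      then show ?thesis using e0 e1 e2 t2 by cases blast+
    qed
    then obtain k where "c = of_nat k * t" by blast
    thus ?thesis using k by simp
  qed
  have "card (UNIV::'a set) = (\<Sum>v\<in>{0,1,2::'a}. card {x\<in>UNIV. abs_trace3 m x = v})"
    by (rule card_fiber_sum[where g="abs_trace3 m"]) (simp, simp, rule T_vals)
  also have "\<dots> = card {x::'a. abs_trace3 m x = 0} + card {x::'a. abs_trace3 m x = 1} + card {x::'a. abs_trace3 m x = 2}"
    using dist012 by (simp add: add.assoc)
  also have "\<dots> = 3 * card {x::'a. abs_trace3 m x = 0}"
    using c012[of 1] c012[of 2] by simp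
  finally have "3 * card {x::'a. abs_trace3 m x = 0} = 3 ^ m" using cardF by simp
  moreover have "(3::nat) ^ m = 3 * rr" using m1 by (metis Suc_diff_le diff_Suc_1 power_Suc)
  ultimately show ?thesis using c012[OF assms] by simp
qed

lemma T0: "abs_trace3 m (0::'a) = 0"
  unfolding abs_trace3_def by (intro sum.neutral) (simp add: power_0_left)

lemma T_add3: "abs_trace3 m ((a::'a) + b + c) = abs_trace3 m a + abs_trace3 m b + abs_trace3 m c"
  by (simp add: T_add)

lemma neg_vals: "c \<in> {0,1,2::'a} \<Longrightarrow> - c \<in> {0,1,2::'a}"
proof -
  assume "c \<in> {0,1,2::'a}"
  moreover have "-(1::'a) = 2" using three0 by (metis add_implies_diff diff_0 numeral_Bit1 numeral_One one_add_one numeral_plus_one add.commute)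
  moreover have "-(2::'a) = 1" using \<open>-(1::'a) = 2\<close> by (metis minus_minus)
  ultimately show ?thesis by auto
qed

lemma rr_pos: "rr \<ge> 1" by simp

lemma card_UNIV_rr: "card (UNIV::'a set) = 3 * rr"
  using cardF m1 by (metis Suc_diff_le diff_Suc_1 power_Suc)

lemma Bcard: "card {y::'a. abs_trace3 m h = 0 \<and> abs_trace3 m (2*y*h) + abs_trace3 m (h^2) = 0}
  = (if h = 0 then 3 * rr else if abs_trace3 m h = 0 then rr else 0)"
proof (cases "h = 0")
  case True
  then show ?thesis using T0 card_UNIV_rr by simp
next
  case hnz: False
  show ?thesis
  proof (cases "abs_trace3 m h = 0")
    case True
    define c where "c = - abs_trace3 m (h^2)"
    have cS: "c \<in> {0,1,2}" unfolding c_def by (rule neg_vals[OF T_vals])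
    have two: "(2::'a) \<noteq> 0" using dist012 by auto
    have "{y::'a. abs_trace3 m h = 0 \<and> abs_trace3 m (2*y*h) + abs_trace3 m (h^2) = 0}
        = {y. abs_trace3 m (2*y*h) = c}" using True unfolding c_def by (auto simp: add_eq_0_iff)
    moreover have "(\<lambda>y. 2*y*h) ` {y. abs_trace3 m (2*y*h) = c} = {z. abs_trace3 m z = c}"
    proof (intro equalityI subsetI)
      fix z assume "z \<in> {z. abs_trace3 m z = c}"
      moreover have "z = 2 * (z / (2*h)) * h" using two hnz by (simp add: field_simps)
      ultimately show "z \<in> (\<lambda>y. 2*y*h) ` {y. abs_trace3 m (2*y*h) = c}"
        by (intro rev_image_eqI[of "z / (2*h)"]) auto
    qed auto
    moreover have "inj (\<lambda>y::'a. 2*y*h)" using two hnz by (auto intro: injI)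
    ultimately have "card {y::'a. abs_trace3 m h = 0 \<and> abs_trace3 m (2*y*h) + abs_trace3 m (h^2) = 0}
        = card {z. abs_trace3 m z = c}" by (metis card_image inj_on_subset subset_UNIV)
    then show ?thesis using fiber_card[OF cS] True hnz by simp
  next
    case False
    then show ?thesis using hnz by simp
  qed
qed

lemma pair_count: "card {(x::'a, y). abs_trace3 m x = abs_trace3 m y \<and> abs_trace3 m (x^2) = abs_trace3 m (y^2)}
  = 3 * rr + (rr - 1) * rr"
proof -
  define D where "D = (SIGMA h:(UNIV::'a set). {y::'a. abs_trace3 m h = 0 \<and> abs_trace3 m (2*y*h) + abs_trace3 m (h^2) = 0})"
  have img: "{(x::'a, y). abs_trace3 m x = abs_trace3 m y \<and> abs_trace3 m (x^2) = abs_trace3 m (y^2)}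
     = (\<lambda>(h,y). (y+h, y)) ` D"
  proof (intro equalityI subsetI)
    fix p assume p: "p \<in> {(x::'a, y). abs_trace3 m x = abs_trace3 m y \<and> abs_trace3 m (x^2) = abs_trace3 m (y^2)}"
    obtain x y where xy: "p = (x, y)" by fastforce
    define h where "h = x - y"
    have x: "x = y + h" unfolding h_def by simp
    have sq: "x^2 = y^2 + 2*y*h + h^2" unfolding x by (simp add: power2_eq_square algebra_simps)
    have e1: "abs_trace3 m (x^2) = abs_trace3 m (y^2) + abs_trace3 m (2*y*h) + abs_trace3 m (h^2)"
      by (simp only: sq T_add3)
    have e2: "abs_trace3 m x = abs_trace3 m y + abs_trace3 m h" by (simp only: x T_add)
    have c1: "abs_trace3 m x = abs_trace3 m y" "abs_trace3 m (x^2) = abs_trace3 m (y^2)" using p xy by auto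
    have "abs_trace3 m h = 0" using e2 c1(1) by simp
    moreover have "abs_trace3 m (2*y*h) + abs_trace3 m (h^2) = 0" using e1 c1(2) by (simp add: add.assoc)
    ultimately have "(h, y) \<in> D" unfolding D_def by simp
    thus "p \<in> (\<lambda>(h,y). (y+h, y)) ` D" unfolding xy x by (intro rev_image_eqI[of "(h,y)"]) auto
  next
    fix p assume "p \<in> (\<lambda>(h,y). (y+h, y)) ` D"
    then obtain hy where "hy \<in> D" "p = (\<lambda>(h,y). (y+h, y)) hy" by blast
    then obtain h y where hy: "(h,y) \<in> D" "p = (y + h, y)" by (cases hy) auto
    have sq: "(y+h)^2 = y^2 + 2*y*h + h^2" by (simp add: power2_eq_square algebra_simps)
    show "p \<in> {(x::'a, y). abs_trace3 m x = abs_trace3 m y \<and> abs_trace3 m (x^2) = abs_trace3 m (y^2)}"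
      using hy unfolding D_def by (simp add: sq T_add3 T_add)
  qed
  have inj: "inj_on (\<lambda>(h::'a,y::'a). (y+h, y)) D" by (auto intro: inj_onI)
  have "card D = (\<Sum>h\<in>(UNIV::'a set). (if h = 0 then 3 * rr else if abs_trace3 m h = 0 then rr else 0))"
    unfolding D_def by (simp add: Bcard)
  also have "\<dots> = 3 * rr + (\<Sum>h\<in>UNIV - {0::'a}. (if h = 0 then 3 * rr else if abs_trace3 m h = 0 then rr else 0))"
    by (subst sum.remove[of _ 0]) auto
  also have "(\<Sum>h\<in>UNIV - {0::'a}. (if h = 0 then 3 * rr else if abs_trace3 m h = 0 then rr else 0))
      = (\<Sum>h\<in>UNIV - {0::'a}. (if abs_trace3 m h = 0 then rr else 0))" by (rule sum.cong) auto
  also have "\<dots> = (\<Sum>h\<in>{h\<in>UNIV - {0::'a}. abs_trace3 m h = 0}. rr)"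
    by (subst sum.inter_filter) auto
  also have "{h\<in>UNIV - {0::'a}. abs_trace3 m h = 0} = {h. abs_trace3 m h = 0} - {0}" by auto
  also have "(\<Sum>h\<in>{h. abs_trace3 m h = 0} - {0::'a}. rr) = (rr - 1) * rr"
    using fiber_card[of 0] T0 by (simp add: card_Diff_singleton)
  finally have "card D = 3 * rr + (rr - 1) * rr" .
  thus ?thesis unfolding img using card_image[OF inj] by simp
qed

lemma row_sum: assumes "u \<in> {0,1,2::'a}" shows "(\<Sum>v\<in>{0,1,2::'a}. AA m u v) = rr"
proof -
  have "card {x::'a. abs_trace3 m x = u} = (\<Sum>v\<in>{0,1,2::'a}. card {x\<in>{x::'a. abs_trace3 m x = u}. abs_trace3 m (x^2) = v})"
    by (rule card_fiber_sum[where g="\<lambda>x. abs_trace3 m (x^2)"]) (simp, simp, rule T_vals)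
  thus ?thesis using fiber_card[OF assms] unfolding AA_def by simp
qed

lemma sq_sum: "(\<Sum>u\<in>{0,1,2::'a}. \<Sum>v\<in>{0,1,2::'a}. (AA m u v)^2) = rr^2 + 2*rr"
proof -
  define P where "P = {(x::'a, y). abs_trace3 m x = abs_trace3 m y \<and> abs_trace3 m (x^2) = abs_trace3 m (y^2)}"
  define S where "S = {0,1,2::'a}"
  have "card P = (\<Sum>w\<in>S \<times> S. card {p\<in>P. (\<lambda>p. (abs_trace3 m (fst p), abs_trace3 m (fst p ^ 2))) p = w})"
  proof (rule card_fiber_sum)
    fix p assume "p \<in> P"
    have "abs_trace3 m (fst p) \<in> S" "abs_trace3 m (fst p ^ 2) \<in> S" unfolding S_def by (rule T_vals)+
    thus "(\<lambda>p. (abs_trace3 m (fst p), abs_trace3 m (fst p ^ 2))) p \<in> S \<times> S" by simp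
  qed (simp_all add: S_def)
  also have "\<dots> = (\<Sum>w\<in>S \<times> S. (AA m (fst w) (snd w))^2)"
  proof (rule sum.cong)
    fix w assume "w \<in> S \<times> S"
    obtain u v where w: "w = (u, v)" by fastforce
    have "{p\<in>P. (\<lambda>p. (abs_trace3 m (fst p), abs_trace3 m (fst p ^ 2))) p = w}
       = {x::'a. abs_trace3 m x = u \<and> abs_trace3 m (x^2) = v} \<times> {x::'a. abs_trace3 m x = u \<and> abs_trace3 m (x^2) = v}"
    proof (rule Set.set_eqI)
      fix p :: "'a \<times> 'a"
      show "p \<in> {p\<in>P. (\<lambda>p. (abs_trace3 m (fst p), abs_trace3 m (fst p ^ 2))) p = w} \<longleftrightarrow> p \<in> {x::'a. abs_trace3 m x = u \<and> abs_trace3 m (x^2) = v} \<times> {x::'a. abs_trace3 m x = u \<and> abs_trace3 m (x^2) = v}"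
        unfolding P_def w by (cases p) auto
    qed
    thus "card {p\<in>P. (\<lambda>p. (abs_trace3 m (fst p), abs_trace3 m (fst p ^ 2))) p = w} = (AA m (fst w) (snd w))^2"
      unfolding AA_def w by (simp add: card_cartesian_product power2_eq_square)
  qed simp
  also have "\<dots> = (\<Sum>u\<in>S. \<Sum>v\<in>S. (AA m u v)^2)"
    by (simp add: sum.cartesian_product split_def)
  finally have "card P = (\<Sum>u\<in>S. \<Sum>v\<in>S. (AA m u v)^2)" .
  moreover have "card P = rr^2 + 2*rr"
  proof -
    have "3 * rr + (rr - 1) * rr = rr * rr + 2 * rr" using rr_pos by (cases rr) (simp_all add: algebra_simps)
    thus ?thesis using pair_count unfolding P_def by (simp add: power2_eq_square)
  qed
  ultimately show ?thesis unfolding S_def by simp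
qed

lemma sum3: "(\<Sum>v\<in>{0,1,2::'a}. g v) = g 0 + g 1 + (g 2 :: real)"
  using dist012 by (simp add: add.assoc)

lemma main: assumes "i \<in> {0,1,2::nat}"
  shows "real (card {x::'a. abs_trace3 m x = of_nat i \<and> abs_trace3 m (x^2) = 0})
           \<ge> (real (3 ^ m) - 6 * sqrt (real (3 ^ m))) / 9"
proof -
  define S where "S = {0,1,2::'a}"
  define c :: 'a where "c = of_nat i"
  have cS: "c \<in> S" using assms unfolding c_def S_def by auto
  define f where "f u = (\<Sum>v\<in>S. (real (AA m u v))^2)" for u
  have rows: "(\<Sum>v\<in>S. real (AA m u v)) = real rr" if "u \<in> S" for u
    using row_sum[of u] that unfolding S_def by (metis of_nat_sum of_nat_numeral of_nat_power)
  have fb: "f u \<ge> (real rr)^2 / 3" if "u \<in> S" for u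
    using rows[OF that] unfolding f_def S_def sum3 by (rule row_bound)
  have tot: "(\<Sum>u\<in>S. f u) = (real rr)^2 + 2 * real rr"
  proof -
    have "real (\<Sum>u\<in>S. \<Sum>v\<in>S. (AA m u v)^2) = real (rr^2 + 2*rr)" using sq_sum unfolding S_def by simp
    thus ?thesis unfolding f_def by (simp add: of_nat_sum)
  qed
  have split: "(\<Sum>u\<in>S. f u) = f c + (\<Sum>u\<in>S - {c}. f u)"
    by (rule sum.remove) (simp add: S_def, rule cS)
  have c3: "card S = 3" unfolding S_def using dist012 by simp
  have cardS: "card (S - {c}) = 2" using cS c3 by (simp add: card_Diff_singleton)
  have "(\<Sum>u\<in>S - {c}. f u) \<ge> (\<Sum>u\<in>S - {c}. (real rr)^2 / 3)"
    by (rule sum_mono) (use fb in auto)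
  hence R: "(\<Sum>u\<in>S - {c}. f u) \<ge> 2 * (real rr)^2 / 3" using cardS by simp
  have rc: "real (AA m c 0) + real (AA m c 1) + real (AA m c 2) = real rr"
    using rows[OF cS] unfolding S_def sum3 .
  have eq: "(real (AA m c 0))^2 + (real (AA m c 1))^2 + (real (AA m c 2))^2 + (\<Sum>u\<in>S - {c}. f u) = (real rr)^2 + 2 * real rr"
    using tot split unfolding f_def S_def sum3 by simp
  have "real (AA m c 0) \<ge> (3 * real rr - 6 * sqrt (3 * real rr)) / 9"
    by (rule final_real[OF rc eq R]) simp
  moreover have "real (3 ^ m :: nat) = 3 * real rr" using card_UNIV_rr cardF by simp
  ultimately show ?thesis unfolding AA_def c_def by simp
qed

end

theorem lemma6:
  fixes m i :: nat
  assumes "m \<ge> 1"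
    and "card (UNIV :: 'a::{field,finite} set) = 3 ^ m"
    and "i \<in> {0, 1, 2}"
  shows "real (card {x :: 'a. abs_trace3 m x = of_nat i \<and> abs_trace3 m (x ^ 2) = 0})
           \<ge> (real (3 ^ m) - 6 * sqrt (real (3 ^ m))) / 9"
  by (rule main[OF assms])

end
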